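(* Let $\Omega\subseteq\mathbb{R}^2$ be open and let $s:\Omega\to\mathbb{R}^n$ be a smooth surface. For a nondegenerate triangle with vertices $a,b,c\in\mathbb{R}^2$ let $a'$ be the mirror vertex of $a$ (the reflection of $a$ across the line through $b$ and $c$). For points $p,q,r$ in a Euclidean space write $\langle p;q;r\rangle=p\wedge q+q\wedge r+r\wedge p$. Then for every $x\in\Omega$, $$\lim \frac{1}{\big[\langle a;b;c\rangle-\langle a';b;c\rangle\big]\cdot\mathbb{I}_2}\Big[\langle s(a);s(b);s(c)\rangle-\langle s(a');s(b);s(c)\rangle\Big] \;=\; \partial_{1}s(x)\wedge\partial_{2}s(x),$$ where the limit is taken as $(a,b,c)\to(x,x,x)$ in $\mathbb{R}^2\times\mathbb{R}^2\times\mathbb{R}^2$ over triples such that the triangle $a,b,c$ is nondegenerate (i.e. $a\wedge b+b\wedge c+c\wedge a\neq 0$) and $a'$ is a balanced mirror vertex of that triangle (with $a,b,c,a'\in\Omega$), and the convergence is in the space of bivectors $\Lambda^2\mathbb{R}^n$.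
   Context: $\wedge$ denotes the exterior (outer) product; bivectors in $\mathbb{R}^n$ are elements of $\Lambda^2\mathbb{R}^n$, with the Euclidean structure in which $\{h_j\wedge h_k\}_{j<k}$ is orthonormal for an orthonormal basis $\{h_1,\dots,h_n\}$ of $\mathbb{R}^n$. For an orthonormal basis $\{\ell_1,\ell_2\}$ of $\mathbb{R}^2$, $\mathbb{I}_2=\ell_1\wedge\ell_2$ and for a bivector $B=\beta\,\ell_1\wedge\ell_2$ in $\mathbb{R}^2$, $B\cdot\mathbb{I}_2=\beta$; note $\langle a;b;c\rangle-\langle a';b;c\rangle=(a'-a)\wedge(c-b)$. $\partial_i s(x)=\sum_j \partial_{\ell_i}\sigma_j(x)\,h_j$ where $\sigma_j=s\cdot h_j$. A real function $\psi:\Omega\to\mathbb{R}$ is smooth if it is $C^2$ on $\Omega$ and the eigenvalues of its Hessian are bounded in absolute value uniformly on $\Omega$; a surface $s:\Omega\to\mathbb{R}^n$ is smooth if every component $\sigma_j$ is a smooth function. The mirror vertex of $a$ in the nondegenerate triangle $a,b,c$ is $a'=-\big[a+2b\frac{(a-c)\cdot(c-b)}{|c-b|^2}+2c\frac{(b-a)\cdot(c-b)}{|c-b|^2}\big]$; it is balanced if $\bar a=\frac12(a+a')$ lies in the closed segment $[b,c]$. *)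

theory Defs
  imports "HOL-Analysis.Analysis"
begin

text \<open>Bivectors in R^n are represented as antisymmetric matrices:
  the bivector u wedge v has (j,k)-coefficient u_j v_k - u_k v_j.\<close>
definition wedge :: "real^'n \<Rightarrow> real^'n \<Rightarrow> real^'n^'n" where
  "wedge u v = (\<chi> j k. u$j * v$k - u$k * v$j)"

definition tri :: "real^'n \<Rightarrow> real^'n \<Rightarrow> real^'n \<Rightarrow> real^'n^'n" where
  "tri p q r = wedge p q + wedge q r + wedge r p"

text \<open>For a bivector B = beta l1 wedge l2 in R^2, B . I_2 = beta.\<close>
definition dotI2 :: "real^2^2 \<Rightarrow> real" where
  "dotI2 B = B$1$2"

definition pd :: "2 \<Rightarrow> (real^2 \<Rightarrow> real) \<Rightarrow> real^2 \<Rightarrow> real" where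
  "pd i f x = deriv (\<lambda>t. f (x + t *\<^sub>R axis i 1)) 0"

definition has_pd :: "2 \<Rightarrow> (real^2 \<Rightarrow> real) \<Rightarrow> real^2 \<Rightarrow> bool" where
  "has_pd i f x \<longleftrightarrow> (\<lambda>t. f (x + t *\<^sub>R axis i 1)) differentiable (at 0)"

definition pds :: "2 \<Rightarrow> (real^2 \<Rightarrow> real^'n) \<Rightarrow> real^2 \<Rightarrow> real^'n" where
  "pds i s x = (\<chi> j. pd i (\<lambda>y. s y $ j) x)"

definition C2_on :: "(real^2) set \<Rightarrow> (real^2 \<Rightarrow> real) \<Rightarrow> bool" where
  "C2_on \<Omega> \<psi> \<longleftrightarrow> continuous_on \<Omega> \<psi>
     \<and> (\<forall>i. \<forall>x\<in>\<Omega>. has_pd i \<psi> x) \<and> (\<forall>i. continuous_on \<Omega> (pd i \<psi>))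
     \<and> (\<forall>i j. \<forall>x\<in>\<Omega>. has_pd j (pd i \<psi>) x)
     \<and> (\<forall>i j. continuous_on \<Omega> (pd j (pd i \<psi>)))"

definition hessian :: "(real^2 \<Rightarrow> real) \<Rightarrow> real^2 \<Rightarrow> real^2^2" where
  "hessian \<psi> x = (\<chi> i j. pd j (pd i \<psi>) x)"

definition eigenvalue :: "real^'m^'m \<Rightarrow> real \<Rightarrow> bool" where
  "eigenvalue A l \<longleftrightarrow> (\<exists>v. v \<noteq> 0 \<and> A *v v = l *\<^sub>R v)"

definition smooth_fun :: "(real^2) set \<Rightarrow> (real^2 \<Rightarrow> real) \<Rightarrow> bool" where
  "smooth_fun \<Omega> \<psi> \<longleftrightarrow> C2_on \<Omega> \<psi>
     \<and> (\<exists>M. \<forall>x\<in>\<Omega>. \<forall>l. eigenvalue (hessian \<psi> x) l \<longrightarrow> \<bar>l\<bar> \<le> M)"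

definition smooth_surface :: "(real^2) set \<Rightarrow> (real^2 \<Rightarrow> real^'n) \<Rightarrow> bool" where
  "smooth_surface \<Omega> s \<longleftrightarrow> (\<forall>j. smooth_fun \<Omega> (\<lambda>x. s x $ j))"

definition nondegenerate :: "real^2 \<Rightarrow> real^2 \<Rightarrow> real^2 \<Rightarrow> bool" where
  "nondegenerate a b c \<longleftrightarrow> tri a b c \<noteq> 0"

definition mirror :: "real^2 \<Rightarrow> real^2 \<Rightarrow> real^2 \<Rightarrow> real^2" where
  "mirror a b c = - (a + (2 * (((a - c) \<bullet> (c - b)) / (norm (c - b))^2)) *\<^sub>R b
                       + (2 * (((b - a) \<bullet> (c - b)) / (norm (c - b))^2)) *\<^sub>R c)"

definition balanced :: "real^2 \<Rightarrow> real^2 \<Rightarrow> real^2 \<Rightarrow> bool" where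
  "balanced a b c \<longleftrightarrow> (1/2) *\<^sub>R (a + mirror a b c) \<in> closed_segment b c"

end

theory Submission
  imports Defs
begin


lemma mvt_bound:
  fixes g g' :: "real \<Rightarrow> real"
  assumes der: "\<And>t. min 0 h \<le> t \<Longrightarrow> t \<le> max 0 h \<Longrightarrow> DERIV g t :> g' t"
    and bd: "\<And>t. min 0 h \<le> t \<Longrightarrow> t \<le> max 0 h \<Longrightarrow> \<bar>g' t - L\<bar> \<le> B"
  shows "\<bar>g h - g 0 - L * h\<bar> \<le> B * \<bar>h\<bar>"
proof -
  define \<phi> where "\<phi> t = g t - L * t" for t
  have d: "DERIV \<phi> t :> g' t - L" if "min 0 h \<le> t" "t \<le> max 0 h" for t
    unfolding \<phi>_def using der[OF that] by (auto intro!: derivative_eq_intros)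
  consider "h > 0" | "h < 0" | "h = 0" by linarith
  then show ?thesis
  proof cases
    case 1
    obtain z where z: "0 < z" "z < h" "\<phi> h - \<phi> 0 = (h - 0) * (g' z - L)"
      using MVT2[OF 1, of \<phi> "\<lambda>t. g' t - L"] d 1 by auto
    have "\<bar>g' z - L\<bar> \<le> B" using bd[of z] z 1 by auto
    then have "\<bar>(h - 0) * (g' z - L)\<bar> \<le> B * \<bar>h\<bar>" using 1 by (simp add: abs_mult mult.commute mult_right_mono)
    then show ?thesis using z unfolding \<phi>_def by simp
  next
    case 2
    obtain z where z: "h < z" "z < 0" "\<phi> 0 - \<phi> h = (0 - h) * (g' z - L)"
      using MVT2[OF 2, of \<phi> "\<lambda>t. g' t - L"] d 2 by auto
    have "\<bar>g' z - L\<bar> \<le> B" using bd[of z] z 2 by auto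
    then have "\<bar>(0 - h) * (g' z - L)\<bar> \<le> B * \<bar>h\<bar>" using 2 by (simp add: abs_mult mult.commute mult_right_mono)
    then show ?thesis using z unfolding \<phi>_def by (simp add: abs_minus_commute)
  next
    case 3 then show ?thesis by simp
  qed
qed

lemma tri_diff: "tri p q r - tri p' q r = wedge (p' - p) (r - q)"
  by (simp add: tri_def wedge_def vec_eq_iff algebra_simps)

lemma mirror_props:
  fixes a b c :: "real^2"
  assumes "c - b \<noteq> 0"
  defines "u \<equiv> mirror a b c - a" and "v \<equiv> c - b"
  shows "u$1 * v$1 + u$2 * v$2 = 0"
    and "u$1 * v$2 - u$2 * v$1 = 2 * ((b-a)$1*(c-b)$2 - (b-a)$2*(c-b)$1)"
proof -
  have L: "(norm (c - b))^2 = (c$1-b$1)^2 + (c$2-b$2)^2"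
    unfolding power2_norm_eq_inner by (simp add: inner_vec_def sum_2 power2_eq_square)
  have nz: "(c$1-b$1)^2 + (c$2-b$2)^2 \<noteq> 0"
  proof
    assume "(c$1-b$1)^2 + (c$2-b$2)^2 = 0"
    then have "c$1 = b$1" "c$2 = b$2" by (auto simp: add_nonneg_eq_0_iff)
    then have "c - b = 0" by (simp add: vec_eq_iff forall_2)
    with assms show False by simp
  qed
  define L where "L = (c$1-b$1)^2 + (c$2-b$2)^2"
  define \<alpha> where "\<alpha> = ((a$1-c$1)*(c$1-b$1) + (a$2-c$2)*(c$2-b$2)) / L"
  define \<beta> where "\<beta> = ((b$1-a$1)*(c$1-b$1) + (b$2-a$2)*(c$2-b$2)) / L"
  have Lnz: "L \<noteq> 0" using nz L_def by simp
  have ab: "\<alpha> + \<beta> = -1"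
  proof -
    have "\<alpha> + \<beta> = (((a$1-c$1)*(c$1-b$1) + (a$2-c$2)*(c$2-b$2)) + ((b$1-a$1)*(c$1-b$1) + (b$2-a$2)*(c$2-b$2))) / L"
      unfolding \<alpha>_def \<beta>_def by (simp add: add_divide_distrib)
    also have "((a$1-c$1)*(c$1-b$1) + (a$2-c$2)*(c$2-b$2)) + ((b$1-a$1)*(c$1-b$1) + (b$2-a$2)*(c$2-b$2)) = - L"
      unfolding L_def by (simp add: power2_eq_square algebra_simps)
    finally show ?thesis using Lnz by simp
  qed
  have m: "mirror a b c $ i = - (a$i + 2 * \<alpha> * b$i + 2 * \<beta> * c$i)" for i
    unfolding mirror_def L \<alpha>_def \<beta>_def L_def by (simp add: inner_vec_def sum_2)
  have ui: "u$i = 2*(b$i - a$i) - 2*\<beta>* v$i" for i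
  proof -
    have "\<alpha> = -1 - \<beta>" using ab by simp
    then show ?thesis unfolding u_def v_def by (simp add: m) (simp add: algebra_simps)
  qed
  have bL: "\<beta> * L = (b$1-a$1)* v$1 + (b$2-a$2)* v$2"
    unfolding \<beta>_def v_def using Lnz by simp
  have Lv: "L = v$1* v$1 + v$2* v$2" unfolding L_def v_def by (simp add: power2_eq_square)
  show "u$1 * v$1 + u$2 * v$2 = 0"
  proof -
    have "u$1 * v$1 + u$2 * v$2 = 2*((b$1-a$1)* v$1 + (b$2-a$2)* v$2) - 2*(\<beta>*L)"
      unfolding ui Lv by (simp add: algebra_simps)
    then show ?thesis using bL by simp
  qed
  show "u$1 * v$2 - u$2 * v$1 = 2 * ((b-a)$1*(c-b)$2 - (b-a)$2*(c-b)$1)"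
    unfolding ui v_def by (simp add: algebra_simps)
qed

lemma dir_deriv:
  assumes "has_pd i f (w + t *\<^sub>R axis i 1)"
  shows "DERIV (\<lambda>\<tau>. f (w + \<tau> *\<^sub>R axis i 1)) t :> pd i f (w + t *\<^sub>R axis i 1)"
proof -
  define q where "q = w + t *\<^sub>R axis i 1"
  define g where "g \<tau> = f (w + \<tau> *\<^sub>R axis i 1)" for \<tau>
  have e: "(\<lambda>s. f (q + s *\<^sub>R axis i 1)) = (\<lambda>s. g (s + t))"
    unfolding q_def g_def by (rule ext) (simp add: algebra_simps scaleR_add_left)
  have "DERIV (\<lambda>s. f (q + s *\<^sub>R axis i 1)) 0 :> pd i f q"
    using assms unfolding has_pd_def pd_def q_def
    using DERIV_deriv_iff_real_differentiable by blast
  then have "DERIV (\<lambda>s. g (s + t)) 0 :> pd i f q" using e by simp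
  then have "DERIV g (0 + t) :> pd i f q" using DERIV_shift by blast
  then show ?thesis unfolding g_def q_def by simp
qed

lemma dir_bound:
  assumes pd: "\<And>\<tau>. min 0 h \<le> \<tau> \<Longrightarrow> \<tau> \<le> max 0 h \<Longrightarrow> has_pd i f (w + \<tau> *\<^sub>R axis i 1)"
    and bd: "\<And>\<tau>. min 0 h \<le> \<tau> \<Longrightarrow> \<tau> \<le> max 0 h \<Longrightarrow> \<bar>pd i f (w + \<tau> *\<^sub>R axis i 1) - L\<bar> \<le> B"
  shows "\<bar>f (w + h *\<^sub>R axis i 1) - f w - L * h\<bar> \<le> B * \<bar>h\<bar>"
  using mvt_bound[of h "\<lambda>\<tau>. f (w + \<tau> *\<^sub>R axis i 1)" "\<lambda>\<tau>. pd i f (w + \<tau> *\<^sub>R axis i 1)" L B]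
    dir_deriv[OF pd] bd by simp

lemma norm2_le: "norm (p::real^2) \<le> \<bar>p$1\<bar> + \<bar>p$2\<bar>"
  using norm_le_l1_cart[of p] by (simp add: sum_2)

lemma strict_diff:
  fixes f :: "real^2 \<Rightarrow> real"
  assumes "open \<Omega>" "x \<in> \<Omega>" and hp: "\<forall>i. \<forall>y\<in>\<Omega>. has_pd i f y"
    and cp: "\<forall>i. continuous_on \<Omega> (pd i f)" and "\<epsilon> > 0"
  shows "\<exists>\<delta>>0. \<forall>y z. norm (y - x) < \<delta> \<longrightarrow> norm (z - x) < \<delta> \<longrightarrow>
     \<bar>f y - f z - (pd 1 f x * (y - z)$1 + pd 2 f x * (y - z)$2)\<bar> \<le> \<epsilon> * norm (y - z)"
proof -
  obtain r where r: "r > 0" "ball x r \<subseteq> \<Omega>" using assms(1,2) open_contains_ball by blast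
  have "\<exists>d>0. \<forall>w\<in>\<Omega>. dist w x < d \<longrightarrow> dist (pd i f w) (pd i f x) < \<epsilon>/2" for i
    using cp assms(2,5) unfolding continuous_on_iff by (meson half_gt_zero)
  then obtain d1 d2 where d1: "d1 > 0" "\<forall>w\<in>\<Omega>. dist w x < d1 \<longrightarrow> dist (pd 1 f w) (pd 1 f x) < \<epsilon>/2"
     and d2: "d2 > 0" "\<forall>w\<in>\<Omega>. dist w x < d2 \<longrightarrow> dist (pd 2 f w) (pd 2 f x) < \<epsilon>/2"
    by meson
  define \<delta> where "\<delta> = min r (min d1 d2) / 2"
  have \<delta>: "\<delta> > 0" using r d1 d2 unfolding \<delta>_def by simp
  have near: "p \<in> \<Omega> \<and> \<bar>pd i f p - pd i f x\<bar> \<le> \<epsilon>/2" if "norm (p - x) < 2*\<delta>" for p i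
  proof -
    have "dist p x < r" "dist p x < d1" "dist p x < d2" using that unfolding \<delta>_def dist_norm by auto
    then have "p \<in> \<Omega>" using r by (auto simp: dist_commute)
    have A1: "\<bar>pd 1 f p - pd 1 f x\<bar> \<le> \<epsilon>/2" using d1(2) \<open>p \<in> \<Omega>\<close> \<open>dist p x < d1\<close>
      by (simp add: dist_real_def less_imp_le)
    have A2: "\<bar>pd 2 f p - pd 2 f x\<bar> \<le> \<epsilon>/2" using d2(2) \<open>p \<in> \<Omega>\<close> \<open>dist p x < d2\<close>
      by (simp add: dist_real_def less_imp_le)
    have "i = 1 \<or> i = 2" by (rule exhaust_2)
    then show ?thesis using A1 A2 \<open>p \<in> \<Omega>\<close> by blast
  qed
  show ?thesis
  proof (intro exI[of _ \<delta>] conjI allI impI \<delta>)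
    fix y z :: "real^2"
    assume y: "norm (y - x) < \<delta>" and z: "norm (z - x) < \<delta>"
    have y1: "\<bar>y$1 - x$1\<bar> < \<delta>" "\<bar>y$2 - x$2\<bar> < \<delta>"
      using y component_le_norm_cart[of "y - x"] by (auto intro: le_less_trans)
    have z1: "\<bar>z$1 - x$1\<bar> < \<delta>" "\<bar>z$2 - x$2\<bar> < \<delta>"
      using z component_le_norm_cart[of "z - x"] by (auto intro: le_less_trans)
    define h1 where "h1 = (y - z)$1"
    define h2 where "h2 = (y - z)$2"
    define w where "w = z + h2 *\<^sub>R axis 2 1"
    have yw: "y = w + h1 *\<^sub>R axis 1 1"
      unfolding w_def h1_def h2_def by (simp add: vec_eq_iff forall_2 axis_def)
    have B1: "\<bar>f (w + h1 *\<^sub>R axis 1 1) - f w - pd 1 f x * h1\<bar> \<le> \<epsilon>/2 * \<bar>h1\<bar>"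
    proof (rule dir_bound)
      fix \<tau> assume t: "min 0 h1 \<le> \<tau>" "\<tau> \<le> max 0 h1"
      have "norm (w + \<tau> *\<^sub>R axis 1 1 - x) \<le> \<bar>(w + \<tau> *\<^sub>R axis 1 1 - x)$1\<bar> + \<bar>(w + \<tau> *\<^sub>R axis 1 1 - x)$2\<bar>"
        by (rule norm2_le)
      note N = this
      have c1: "(w + \<tau> *\<^sub>R axis 1 1 - x)$1 = z$1 + \<tau> - x$1" "(w + \<tau> *\<^sub>R axis 1 1 - x)$2 = y$2 - x$2"
        unfolding w_def h2_def by (simp_all add: axis_def)
      have "\<bar>z$1 + \<tau> - x$1\<bar> < \<delta>" using t y1(1) z1(1) unfolding h1_def by (simp add: abs_less_iff min_def max_def split: if_splits; linarith)
      have "\<bar>(w + \<tau> *\<^sub>R axis 1 1 - x)$1\<bar> + \<bar>(w + \<tau> *\<^sub>R axis 1 1 - x)$2\<bar> < 2*\<delta>"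
        unfolding c1 using \<open>\<bar>z$1 + \<tau> - x$1\<bar> < \<delta>\<close> y1(2) by linarith
      note S = this
      have "norm (w + \<tau> *\<^sub>R axis 1 1 - x) < 2*\<delta>" using N S by linarith
      then have "(w + \<tau> *\<^sub>R axis 1 1) \<in> \<Omega> \<and> \<bar>pd 1 f (w + \<tau> *\<^sub>R axis 1 1) - pd 1 f x\<bar> \<le> \<epsilon>/2" by (rule near)
      then show "has_pd 1 f (w + \<tau> *\<^sub>R axis 1 1)" "\<bar>pd 1 f (w + \<tau> *\<^sub>R axis 1 1) - pd 1 f x\<bar> \<le> \<epsilon>/2"
        using hp by blast+
    qed
    have B2: "\<bar>f (z + h2 *\<^sub>R axis 2 1) - f z - pd 2 f x * h2\<bar> \<le> \<epsilon>/2 * \<bar>h2\<bar>"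
    proof (rule dir_bound)
      fix \<tau> assume t: "min 0 h2 \<le> \<tau>" "\<tau> \<le> max 0 h2"
      have "norm (z + \<tau> *\<^sub>R axis 2 1 - x) \<le> \<bar>(z + \<tau> *\<^sub>R axis 2 1 - x)$1\<bar> + \<bar>(z + \<tau> *\<^sub>R axis 2 1 - x)$2\<bar>"
        by (rule norm2_le)
      note N = this
      have c1: "(z + \<tau> *\<^sub>R axis 2 1 - x)$1 = z$1 - x$1" "(z + \<tau> *\<^sub>R axis 2 1 - x)$2 = z$2 + \<tau> - x$2"
        by (simp_all add: axis_def)
      have "\<bar>z$2 + \<tau> - x$2\<bar> < \<delta>" using t y1(2) z1(2) unfolding h2_def by (simp add: abs_less_iff min_def max_def split: if_splits; linarith)
      have "\<bar>(z + \<tau> *\<^sub>R axis 2 1 - x)$1\<bar> + \<bar>(z + \<tau> *\<^sub>R axis 2 1 - x)$2\<bar> < 2*\<delta>"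
        unfolding c1 using \<open>\<bar>z$2 + \<tau> - x$2\<bar> < \<delta>\<close> z1(1) by linarith
      note S = this
      have "norm (z + \<tau> *\<^sub>R axis 2 1 - x) < 2*\<delta>" using N S by linarith
      then have "(z + \<tau> *\<^sub>R axis 2 1) \<in> \<Omega> \<and> \<bar>pd 2 f (z + \<tau> *\<^sub>R axis 2 1) - pd 2 f x\<bar> \<le> \<epsilon>/2" by (rule near)
      then show "has_pd 2 f (z + \<tau> *\<^sub>R axis 2 1)" "\<bar>pd 2 f (z + \<tau> *\<^sub>R axis 2 1) - pd 2 f x\<bar> \<le> \<epsilon>/2"
        using hp by blast+
    qed
    have "\<bar>h1\<bar> \<le> norm (y - z)" "\<bar>h2\<bar> \<le> norm (y - z)"
      unfolding h1_def h2_def by (rule component_le_norm_cart)+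
    then have "\<epsilon>/2 * \<bar>h1\<bar> + \<epsilon>/2 * \<bar>h2\<bar> \<le> \<epsilon> * norm (y - z)"
    proof -
      assume a: "\<bar>h1\<bar> \<le> norm (y - z)" "\<bar>h2\<bar> \<le> norm (y - z)"
      have "\<epsilon>/2 * \<bar>h1\<bar> \<le> \<epsilon>/2 * norm (y - z)" "\<epsilon>/2 * \<bar>h2\<bar> \<le> \<epsilon>/2 * norm (y - z)"
        using a \<open>\<epsilon> > 0\<close> by (simp_all add: mult_left_mono)
      then show ?thesis by linarith
    qed
    then show "\<bar>f y - f z - (pd 1 f x * (y - z)$1 + pd 2 f x * (y - z)$2)\<bar> \<le> \<epsilon> * norm (y - z)"
    proof -
      have "f y = f (w + h1 *\<^sub>R axis 1 1)" using yw by simp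
      moreover have "f w = f (z + h2 *\<^sub>R axis 2 1)" by (simp add: w_def)
      ultimately show ?thesis using B1 B2 \<open>\<epsilon>/2 * \<bar>h1\<bar> + \<epsilon>/2 * \<bar>h2\<bar> \<le> \<epsilon> * norm (y - z)\<close>
        unfolding h1_def h2_def by linarith
    qed
  qed
qed



lemma key_bound:
  fixes Pj Qj Pk Qk u1 u2 y1 y2 Uj Uk Vj Vk Nu Nv \<epsilon> K d :: real
  assumes e1j: "\<bar>Uj - (Pj*u1 + Qj*u2)\<bar> \<le> \<epsilon>*Nu" and e1k: "\<bar>Uk - (Pk*u1 + Qk*u2)\<bar> \<le> \<epsilon>*Nu"
    and e2j: "\<bar>Vj - (Pj*y1 + Qj*y2)\<bar> \<le> \<epsilon>*Nv" and e2k: "\<bar>Vk - (Pk*y1 + Qk*y2)\<bar> \<le> \<epsilon>*Nv"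
    and u: "\<bar>u1\<bar> \<le> Nu" "\<bar>u2\<bar> \<le> Nu" and yv: "\<bar>y1\<bar> \<le> Nv" "\<bar>y2\<bar> \<le> Nv"
    and K: "\<bar>Pj\<bar> \<le> K" "\<bar>Qj\<bar> \<le> K" "\<bar>Pk\<bar> \<le> K" "\<bar>Qk\<bar> \<le> K"
    and eps: "0 \<le> \<epsilon>" "\<epsilon> \<le> 1"
    and N: "Nu * Nv \<le> \<bar>d\<bar>" and d: "d = u1*y2 - u2*y1" "d \<noteq> 0"
  shows "\<bar>(Uj*Vk - Uk*Vj)/d - (Pj*Qk - Pk*Qj)\<bar> \<le> (8*K+2)*\<epsilon>"
proof -
  define Aj where "Aj = Pj*u1 + Qj*u2"
  define Ak where "Ak = Pk*u1 + Qk*u2"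
  define Bj where "Bj = Pj*y1 + Qj*y2"
  define Bk where "Bk = Pk*y1 + Qk*y2"
  define aj where "aj = Uj - Aj"
  define ak where "ak = Uk - Ak"
  define bj where "bj = Vj - Bj"
  define bk where "bk = Vk - Bk"
  have Nu0: "0 \<le> Nu" using u by linarith
  have Nv0: "0 \<le> Nv" using yv by linarith
  have K0: "0 \<le> K" using K by linarith
  have pb: "\<bar>p*w\<bar> \<le> K * N" if "\<bar>p\<bar> \<le> K" "\<bar>w\<bar> \<le> N" for p w N
    unfolding abs_mult using that K0 by (simp add: mult_mono)
  have Aj: "\<bar>Aj\<bar> \<le> 2*K*Nu" unfolding Aj_def using pb[OF K(1) u(1)] pb[OF K(2) u(2)] by linarith
  have Ak: "\<bar>Ak\<bar> \<le> 2*K*Nu" unfolding Ak_def using pb[OF K(3) u(1)] pb[OF K(4) u(2)] by linarith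
  have Bj: "\<bar>Bj\<bar> \<le> 2*K*Nv" unfolding Bj_def using pb[OF K(1) yv(1)] pb[OF K(2) yv(2)] by linarith
  have Bk: "\<bar>Bk\<bar> \<le> 2*K*Nv" unfolding Bk_def using pb[OF K(3) yv(1)] pb[OF K(4) yv(2)] by linarith
  have aj: "\<bar>aj\<bar> \<le> \<epsilon>*Nu" and ak: "\<bar>ak\<bar> \<le> \<epsilon>*Nu" and bj: "\<bar>bj\<bar> \<le> \<epsilon>*Nv" and bk: "\<bar>bk\<bar> \<le> \<epsilon>*Nv"
    using e1j e1k e2j e2k by (simp_all add: aj_def ak_def bj_def bk_def Aj_def Ak_def Bj_def Bk_def)
  have pr: "\<bar>p*q\<bar> \<le> X*Y" if "\<bar>p\<bar> \<le> X" "\<bar>q\<bar> \<le> Y" for p q X Y :: real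
    unfolding abs_mult using that by (simp add: mult_mono')
  have t1: "\<bar>Aj*bk\<bar> \<le> (2*K*Nu)*(\<epsilon>*Nv)" by (rule pr[OF Aj bk])
  have t2: "\<bar>aj*Bk\<bar> \<le> (\<epsilon>*Nu)*(2*K*Nv)" by (rule pr[OF aj Bk])
  have t3: "\<bar>aj*bk\<bar> \<le> (\<epsilon>*Nu)*(\<epsilon>*Nv)" by (rule pr[OF aj bk])
  have t4: "\<bar>Ak*bj\<bar> \<le> (2*K*Nu)*(\<epsilon>*Nv)" by (rule pr[OF Ak bj])
  have t5: "\<bar>ak*Bj\<bar> \<le> (\<epsilon>*Nu)*(2*K*Nv)" by (rule pr[OF ak Bj])
  have t6: "\<bar>ak*bj\<bar> \<le> (\<epsilon>*Nu)*(\<epsilon>*Nv)" by (rule pr[OF ak bj])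
  have ee: "(\<epsilon>*Nu)*(\<epsilon>*Nv) \<le> \<epsilon>*(Nu*Nv)"
  proof -
    have "\<epsilon>*\<epsilon> \<le> \<epsilon>" using eps by (simp add: mult_le_one mult_left_le)
    then have "(\<epsilon>*\<epsilon>)*(Nu*Nv) \<le> \<epsilon>*(Nu*Nv)" using Nu0 Nv0 by (simp add: mult_right_mono)
    then show ?thesis by (simp add: algebra_simps)
  qed
  have id: "Uj*Vk - Uk*Vj - d*(Pj*Qk - Pk*Qj) = Aj*bk + aj*Bk + aj*bk - Ak*bj - ak*Bj - ak*bj"
    unfolding aj_def ak_def bj_def bk_def Aj_def Ak_def Bj_def Bk_def d(1) by (simp add: algebra_simps)
  have "\<bar>Uj*Vk - Uk*Vj - d*(Pj*Qk - Pk*Qj)\<bar> \<le> (8*K+2)*\<epsilon>*(Nu*Nv)"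
    unfolding id using t1 t2 t3 t4 t5 t6 ee by (simp add: algebra_simps)
  also have "\<dots> \<le> (8*K+2)*\<epsilon>*\<bar>d\<bar>" using N K0 eps by (simp add: mult_left_mono)
  finally have X: "\<bar>Uj*Vk - Uk*Vj - d*(Pj*Qk - Pk*Qj)\<bar> \<le> (8*K+2)*\<epsilon>*\<bar>d\<bar>" .
  have "(Uj*Vk - Uk*Vj)/d - (Pj*Qk - Pk*Qj) = (Uj*Vk - Uk*Vj - d*(Pj*Qk - Pk*Qj)) / d"
    using d(2) by (simp add: field_simps)
  then have "\<bar>(Uj*Vk - Uk*Vj)/d - (Pj*Qk - Pk*Qj)\<bar> = \<bar>Uj*Vk - Uk*Vj - d*(Pj*Qk - Pk*Qj)\<bar> / \<bar>d\<bar>"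
    by simp
  also have "\<dots> \<le> (8*K+2)*\<epsilon>" using X d(2) by (simp add: divide_le_eq)
  finally show ?thesis .
qed



theorem theorem2:
  fixes \<Omega> :: "(real^2) set" and s :: "real^2 \<Rightarrow> real^'n" and x :: "real^2"
  assumes "open \<Omega>" and "smooth_surface \<Omega> s" and "x \<in> \<Omega>"
  shows "((\<lambda>(a, b, c). (1 / dotI2 (tri a b c - tri (mirror a b c) b c)) *\<^sub>R
            (tri (s a) (s b) (s c) - tri (s (mirror a b c)) (s b) (s c)))
         \<longlongrightarrow> wedge (pds 1 s x) (pds 2 s x))
         (at (x, x, x) within
            {(a, b, c). nondegenerate a b c \<and> balanced a b c
               \<and> a \<in> \<Omega> \<and> b \<in> \<Omega> \<and> c \<in> \<Omega> \<and> mirror a b c \<in> \<Omega>})"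
proof -
  define f where "f j = (\<lambda>y. s y $ j)" for j
  have hp: "\<forall>i. \<forall>y\<in>\<Omega>. has_pd i (f j) y" and cp: "\<forall>i. continuous_on \<Omega> (pd i (f j))" for j
    using assms(2) unfolding smooth_surface_def smooth_fun_def C2_on_def f_def by blast+
  define P where "P = pds 1 s x"
  define Q where "Q = pds 2 s x"
  define K where "K = norm P + norm Q"
  have PQj: "P$j = pd 1 (f j) x" "Q$j = pd 2 (f j) x" for j
    unfolding P_def Q_def pds_def f_def by simp_all
  have KP: "\<bar>P$j\<bar> \<le> K" "\<bar>Q$j\<bar> \<le> K" for j
    unfolding K_def using component_le_norm_cart[of P j] component_le_norm_cart[of Q j] norm_ge_zero[of P] norm_ge_zero[of Q]
    by linarith+
  have K0: "0 \<le> K" unfolding K_def by simp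
  define S where "S = {(a, b, c). nondegenerate a b c \<and> balanced a b c
               \<and> a \<in> \<Omega> \<and> b \<in> \<Omega> \<and> c \<in> \<Omega> \<and> mirror a b c \<in> \<Omega>}"
  define F where "F = (\<lambda>(a, b, c). (1 / dotI2 (tri a b c - tri (mirror a b c) b c)) *\<^sub>R
            (tri (s a) (s b) (s c) - tri (s (mirror a b c)) (s b) (s c)))"
  define W where "W = wedge P Q"
  define n where "n = real CARD('n)"
  have n1: "n \<ge> 1" unfolding n_def by simp
  have "(F \<longlongrightarrow> W) (at (x, x, x) within S)"
    unfolding tendsto_iff eventually_at
  proof (intro allI impI)
    fix e :: real assume e: "e > 0"
    define \<epsilon> where "\<epsilon> = min 1 (e / (2 * n^2 * (8*K+2)))"
    have \<epsilon>: "\<epsilon> > 0" "\<epsilon> \<le> 1" unfolding \<epsilon>_def using e n1 K0 by auto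
    have "\<epsilon> * (2 * n^2 * (8*K+2)) \<le> e"
    proof -
      have "\<epsilon> \<le> e / (2 * n^2 * (8*K+2))" unfolding \<epsilon>_def by simp
      then show ?thesis using n1 K0 by (simp add: le_divide_eq)
    qed
    then have eb: "n * (n * ((8*K+2)*\<epsilon>)) < e" using e n1 K0 \<epsilon> by (simp add: power2_eq_square algebra_simps)
    have "\<forall>j. \<exists>\<delta>>0. \<forall>y z. norm (y - x) < \<delta> \<longrightarrow> norm (z - x) < \<delta> \<longrightarrow>
     \<bar>f j y - f j z - (pd 1 (f j) x * (y - z)$1 + pd 2 (f j) x * (y - z)$2)\<bar> \<le> \<epsilon> * norm (y - z)"
      using strict_diff[OF assms(1) assms(3) hp cp \<epsilon>(1)] by blast
    then obtain \<delta>f where \<delta>f: "\<And>j. \<delta>f j > 0" "\<And>j y z. norm (y - x) < \<delta>f j \<Longrightarrow> norm (z - x) < \<delta>f j \<Longrightarrow>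
     \<bar>f j y - f j z - (pd 1 (f j) x * (y - z)$1 + pd 2 (f j) x * (y - z)$2)\<bar> \<le> \<epsilon> * norm (y - z)"
      by metis
    define \<delta>0 where "\<delta>0 = Min (range \<delta>f)"
    have \<delta>0: "\<delta>0 > 0" "\<And>j. \<delta>0 \<le> \<delta>f j" unfolding \<delta>0_def using \<delta>f(1) by auto
    have SD: "\<bar>f j y - f j z - (P$j * (y - z)$1 + Q$j * (y - z)$2)\<bar> \<le> \<epsilon> * norm (y - z)"
      if "norm (y - x) < \<delta>0" "norm (z - x) < \<delta>0" for j y z
      unfolding PQj using \<delta>f(2)[of y j z] that \<delta>0(2)[of j] by linarith
    show "\<exists>d>0. \<forall>t\<in>S. t \<noteq> (x, x, x) \<and> dist t (x, x, x) < d \<longrightarrow> dist (F t) W < e"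
    proof (intro exI[of _ "\<delta>0/3"] conjI ballI impI)
      show "\<delta>0/3 > 0" using \<delta>0 by simp
      fix t assume tS: "t \<in> S" and td: "t \<noteq> (x, x, x) \<and> dist t (x, x, x) < \<delta>0/3"
      obtain a b c where t: "t = (a, b, c)" by (cases t) auto
      have da: "norm (a - x) < \<delta>0/3"
        using dist_fst_le[of t "(x,x,x)"] td unfolding t by (simp add: dist_norm)
      have dbc: "dist (b, c) (x, x) < \<delta>0/3"
        using dist_snd_le[of t "(x,x,x)"] td unfolding t by simp
      have db: "norm (b - x) < \<delta>0/3"
        using dist_fst_le[of "(b,c)" "(x,x)"] dbc by (simp add: dist_norm)
      have dc: "norm (c - x) < \<delta>0/3"
        using dist_snd_le[of "(b,c)" "(x,x)"] dbc by (simp add: dist_norm)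
      have nd: "tri a b c \<noteq> 0" and bal: "balanced a b c" using tS unfolding S_def t nondegenerate_def by auto
      define T where "T = (b-a)$1*(c-b)$2 - (b-a)$2*(c-b)$1"
      have triT: "tri a b c $1$2 = T" "tri a b c $2$1 = - T" "tri a b c $1$1 = 0" "tri a b c $2$2 = 0"
        unfolding T_def tri_def wedge_def by (simp_all add: algebra_simps)
      have T0: "T \<noteq> 0"
      proof
        assume "T = 0"
        then have "tri a b c = 0" using triT by (simp add: vec_eq_iff forall_2)
        with nd show False by simp
      qed
      have cb: "c - b \<noteq> 0" using T0 unfolding T_def by auto
      define a' where "a' = mirror a b c"
      define u where "u = a' - a"
      define v where "v = c - b"
      have uv: "u$1 * v$1 + u$2 * v$2 = 0" and det: "u$1 * v$2 - u$2 * v$1 = 2 * T"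
        using mirror_props[OF cb, of a] unfolding u_def v_def a'_def T_def by simp_all
      define dd where "dd = u$1 * v$2 - u$2 * v$1"
      have dd0: "dd \<noteq> 0" using det T0 unfolding dd_def by simp
      have dden: "dotI2 (tri a b c - tri a' b c) = dd"
        unfolding tri_diff dotI2_def wedge_def dd_def u_def v_def by simp
      have nu: "(norm u)^2 = u$1*u$1 + u$2*u$2"
        unfolding power2_norm_eq_inner by (simp add: inner_vec_def sum_2)
      have nv: "(norm v)^2 = v$1* v$1 + v$2* v$2"
        unfolding power2_norm_eq_inner by (simp add: inner_vec_def sum_2)
      have "(norm u * norm v)^2 = dd^2 + (u$1 * v$1 + u$2 * v$2)^2"
        unfolding power_mult_distrib nu nv dd_def by (simp add: power2_eq_square algebra_simps)
      then have "(norm u * norm v)^2 = dd^2" using uv by simp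
      then have NN: "norm u * norm v \<le> \<bar>dd\<bar>"
        by (metis abs_le_square_iff abs_mult abs_norm_cancel order_refl)
      define m where "m = (1/2) *\<^sub>R (a + a')"
      have "m \<in> closed_segment b c" using bal unfolding balanced_def m_def a'_def .
      moreover have "closed_segment b c \<subseteq> ball x (\<delta>0/3)"
        by (rule closed_segment_subset) (use db dc in \<open>auto simp: dist_norm norm_minus_commute\<close>)
      ultimately have dm: "norm (m - x) < \<delta>0/3" by (auto simp: dist_norm norm_minus_commute)
      have "a' - x = 2 *\<^sub>R (m - x) - (a - x)" unfolding m_def by (simp add: scaleR_right_distrib scaleR_right_diff_distrib scaleR_2)
      then have "norm (a' - x) \<le> 2 * norm (m - x) + norm (a - x)"
        by (metis norm_triangle_ineq4 norm_scaleR abs_numeral)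
      then have da': "norm (a' - x) < \<delta>0" using dm da by linarith
      have a3: "norm (a - x) < \<delta>0" "norm (b - x) < \<delta>0" "norm (c - x) < \<delta>0" using da db dc \<delta>0 by linarith+
      define U where "U = s a' - s a"
      define V where "V = s c - s b"
      have Ftj: "F t $ j $ k = (U$j * V$k - U$k * V$j) / dd" for j k
        unfolding F_def t using dden
        by (simp add: tri_diff wedge_def U_def V_def a'_def[symmetric])
      have EU: "\<bar>U$j - (P$j * u$1 + Q$j * u$2)\<bar> \<le> \<epsilon> * norm u" for j
        using SD[OF da' a3(1), of j] unfolding U_def u_def f_def by simp
      have EV: "\<bar>V$j - (P$j * v$1 + Q$j * v$2)\<bar> \<le> \<epsilon> * norm v" for j
        using SD[OF a3(3) a3(2), of j] unfolding V_def v_def f_def by simp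
      have comp: "\<bar>(F t - W) $ j $ k\<bar> \<le> (8*K+2)*\<epsilon>" for j k
      proof -
        have "\<bar>(U$j * V$k - U$k * V$j) / dd - (P$j * Q$k - P$k * Q$j)\<bar> \<le> (8*K+2)*\<epsilon>"
          by (rule key_bound[OF EU[of j] EU[of k] EV[of j] EV[of k]
                component_le_norm_cart component_le_norm_cart component_le_norm_cart component_le_norm_cart
                KP(1) KP(2) KP(1) KP(2) _ \<epsilon>(2) NN dd_def dd0]) (use \<epsilon> in simp)
        then show ?thesis unfolding W_def using Ftj by (simp add: wedge_def)
      qed
      have "norm (F t - W) \<le> (\<Sum>j\<in>UNIV. norm ((F t - W) $ j))" by (simp add: norm_vec_def L2_set_le_sum)
      also have "\<dots> \<le> (\<Sum>j\<in>(UNIV::'n set). n * ((8*K+2)*\<epsilon>))"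
      proof (rule sum_mono)
        fix j :: 'n
        have "norm ((F t - W) $ j) \<le> (\<Sum>k\<in>UNIV. \<bar>(F t - W) $ j $ k\<bar>)" by (rule norm_le_l1_cart)
        also have "\<dots> \<le> (\<Sum>k\<in>(UNIV::'n set). (8*K+2)*\<epsilon>)" by (rule sum_mono) (rule comp)
        also have "\<dots> = n * ((8*K+2)*\<epsilon>)" unfolding n_def by simp
        finally show "norm ((F t - W) $ j) \<le> n * ((8*K+2)*\<epsilon>)" .
      qed
      also have "\<dots> = n * (n * ((8*K+2)*\<epsilon>))" unfolding n_def by simp
      finally show "dist (F t) W < e" using eb by (simp add: dist_norm)
    qed
  qed
  then show ?thesis unfolding F_def S_def W_def P_def Q_def .
qed

end
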